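(* For $i\in[2]$, let $A^ix^i+b^iy\le d^i$ be totally dual integral inequality systems in variables $x^i\in\mathbb{R}^{n_i}$ and a common scalar variable $y\in\mathbb{R}$, where $A^i\in\mathbb{Z}^{m_i\times n_i}$ and $b^i,d^i\in\mathbb{Z}^{m_i}$, and suppose each of these systems implies $0\le y\le1$. Then the combined system $A^1x^1+b^1y\le d^1$, $A^2x^2+b^2y\le d^2$ (in the variables $(x^1,x^2,y)$) is totally dual integral.
   Context: A system $Ax\le b$ with rational data is totally dual integral if for every integral objective $w$ for which $\max\{w^\top x: Ax\le b\}$ is finite, the dual $\min\{b^\top u: A^\top u=w,\ u\ge0\}$ has an integral optimal solution. *)

theory Defs
  imports Main "HOL-Library.Set_Algebras" Complex_Main
begin

text \<open>Matrices are
  functions nat \<Rightarrow> nat \<Rightarrow> real (row, column), vectors nat \<Rightarrow> real;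
  only the entries with row index < m and column index < n matter.\<close>

definition feasible :: "nat \<Rightarrow> nat \<Rightarrow> (nat \<Rightarrow> nat \<Rightarrow> real) \<Rightarrow> (nat \<Rightarrow> real) \<Rightarrow> (nat \<Rightarrow> real) \<Rightarrow> bool" where
  "feasible m n A d x \<longleftrightarrow> (\<forall>r<m. (\<Sum>j<n. A r j * x j) \<le> d r)"

definition dual_feasible :: "nat \<Rightarrow> nat \<Rightarrow> (nat \<Rightarrow> nat \<Rightarrow> real) \<Rightarrow> (nat \<Rightarrow> real) \<Rightarrow> (nat \<Rightarrow> real) \<Rightarrow> bool" where
  "dual_feasible m n A w u \<longleftrightarrow> (\<forall>r<m. u r \<ge> 0) \<and> (\<forall>j<n. (\<Sum>r<m. A r j * u r) = w j)"

definition TDI :: "nat \<Rightarrow> nat \<Rightarrow> (nat \<Rightarrow> nat \<Rightarrow> real) \<Rightarrow> (nat \<Rightarrow> real) \<Rightarrow> bool" where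
  "TDI m n A d \<longleftrightarrow>
    (\<forall>w :: nat \<Rightarrow> int.
       (\<exists>x. feasible m n A d x \<and>
            (\<forall>x'. feasible m n A d x' \<longrightarrow> (\<Sum>j<n. of_int (w j) * x' j) \<le> (\<Sum>j<n. of_int (w j) * x j)))
       \<longrightarrow> (\<exists>u :: nat \<Rightarrow> int.
              dual_feasible m n A (\<lambda>j. of_int (w j)) (\<lambda>r. of_int (u r)) \<and>
              (\<forall>u'. dual_feasible m n A (\<lambda>j. of_int (w j)) u' \<longrightarrow>
                    (\<Sum>r<m. d r * of_int (u r)) \<le> (\<Sum>r<m. d r * u' r))))"

text \<open>The system A x + b y \<le> d in variables (x_0..x_{n-1}, y): y is column n.\<close>
definition sys_mat :: "nat \<Rightarrow> (nat \<Rightarrow> nat \<Rightarrow> int) \<Rightarrow> (nat \<Rightarrow> int) \<Rightarrow> nat \<Rightarrow> nat \<Rightarrow> real" where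
  "sys_mat n A b = (\<lambda>r c. if c < n then of_int (A r c) else if c = n then of_int (b r) else 0)"

text \<open>Combined system: variables x^1 (columns 0..n1-1), x^2 (columns n1..n1+n2-1),
  y (column n1+n2); rows 0..m1-1 from system 1, rows m1..m1+m2-1 from system 2.\<close>
definition comb_mat :: "nat \<Rightarrow> nat \<Rightarrow> nat \<Rightarrow> (nat \<Rightarrow> nat \<Rightarrow> int) \<Rightarrow> (nat \<Rightarrow> int)
     \<Rightarrow> (nat \<Rightarrow> nat \<Rightarrow> int) \<Rightarrow> (nat \<Rightarrow> int) \<Rightarrow> nat \<Rightarrow> nat \<Rightarrow> real" where
  "comb_mat m1 n1 n2 A1 b1 A2 b2 = (\<lambda>r c.
     if r < m1 then
       (if c < n1 then of_int (A1 r c) else if c = n1 + n2 then of_int (b1 r) else 0)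
     else
       (if n1 \<le> c \<and> c < n1 + n2 then of_int (A2 (r - m1) (c - n1))
        else if c = n1 + n2 then of_int (b2 (r - m1)) else 0))"

definition comb_rhs :: "nat \<Rightarrow> (nat \<Rightarrow> int) \<Rightarrow> (nat \<Rightarrow> int) \<Rightarrow> nat \<Rightarrow> real" where
  "comb_rhs m1 d1 d2 = (\<lambda>r. if r < m1 then of_int (d1 r) else of_int (d2 (r - m1)))"

end

theory Submission
  imports Defs
begin

definition dotn :: "nat \<Rightarrow> (nat \<Rightarrow> real) \<Rightarrow> (nat \<Rightarrow> real) \<Rightarrow> real" where
  "dotn n a x = (\<Sum>j<n. a j * x j)"

inductive_set cone_of :: "((nat \<Rightarrow> real) \<times> real) set \<Rightarrow> ((nat \<Rightarrow> real) \<times> real) set"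
  for S where
  cone_zero: "((\<lambda>_. 0), 0) \<in> cone_of S"
| cone_step: "c \<in> cone_of S \<Longrightarrow> s \<in> S \<Longrightarrow> (l::real) \<ge> 0 \<Longrightarrow>
     ((\<lambda>j. fst c j + l * fst s j), snd c + l * snd s) \<in> cone_of S"

lemma cone_add:
  assumes "c2 \<in> cone_of S" "c1 \<in> cone_of S"
  shows "((\<lambda>j. fst c1 j + fst c2 j), snd c1 + snd c2) \<in> cone_of S"
  using assms
proof (induction rule: cone_of.induct)
  case cone_zero
  then show ?case by simp
next
  case (cone_step c s l)
  have "((\<lambda>j. fst ((\<lambda>j. fst c1 j + fst c j), snd c1 + snd c) j + l * fst s j),
          snd ((\<lambda>j. fst c1 j + fst c j), snd c1 + snd c) + l * snd s) \<in> cone_of S"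
    by (rule cone_of.cone_step[OF cone_step.IH[OF cone_step.prems] cone_step.hyps(2,3)])
  then show ?case by (simp add: add.assoc)
qed

lemma cone_scale:
  assumes "c \<in> cone_of S" "(\<mu>::real) \<ge> 0"
  shows "((\<lambda>j. \<mu> * fst c j), \<mu> * snd c) \<in> cone_of S"
  using assms
proof (induction rule: cone_of.induct)
  case cone_zero
  then show ?case by (simp add: cone_of.cone_zero)
next
  case (cone_step c s l)
  have "((\<lambda>j. fst ((\<lambda>j. \<mu> * fst c j), \<mu> * snd c) j + (\<mu> * l) * fst s j),
          snd ((\<lambda>j. \<mu> * fst c j), \<mu> * snd c) + (\<mu> * l) * snd s) \<in> cone_of S"
    using cone_step by (intro cone_of.cone_step) auto
  then show ?case by (simp add: distrib_left mult.assoc)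
qed

lemma cone_sub:
  assumes "S' \<subseteq> cone_of S" "c \<in> cone_of S'"
  shows "c \<in> cone_of S"
  using assms(2)
proof (induction rule: cone_of.induct)
  case cone_zero
  then show ?case by (rule cone_of.cone_zero)
next
  case (cone_step c s l)
  have "((\<lambda>j. l * fst s j), l * snd s) \<in> cone_of S"
    using cone_step assms(1) by (intro cone_scale) auto
  from cone_add[OF this cone_step.IH] show ?case by simp
qed

lemma cone_coord:
  assumes "\<forall>s\<in>S. fst s k = 0" "c \<in> cone_of S"
  shows "fst c k = 0"
  using assms(2) by (induction rule: cone_of.induct) (auto simp: assms(1))

lemma cone_two:
  assumes "s1 \<in> S" "s2 \<in> S" "(l1::real) \<ge> 0" "(l2::real) \<ge> 0"
  shows "((\<lambda>j. l1 * fst s1 j + l2 * fst s2 j), l1 * snd s1 + l2 * snd s2) \<in> cone_of S"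
proof -
  have a: "((\<lambda>j. l1 * fst s1 j), l1 * snd s1) \<in> cone_of S"
    using cone_of.cone_step[OF cone_of.cone_zero assms(1,3)] by simp
  show ?thesis using cone_of.cone_step[OF a assms(2,4)] by simp
qed

lemma cone_repr:
  assumes "finite I" "c \<in> cone_of (f ` I)"
  shows "\<exists>u. (\<forall>i\<in>I. u i \<ge> 0) \<and> (\<forall>j. fst c j = (\<Sum>i\<in>I. u i * fst (f i) j))
             \<and> snd c = (\<Sum>i\<in>I. u i * snd (f i))"
  using assms(2)
proof (induction rule: cone_of.induct)
  case cone_zero
  then show ?case by (intro exI[of _ "\<lambda>_. 0"]) auto
next
  case (cone_step c s l)
  obtain u where u: "\<forall>i\<in>I. u i \<ge> 0" "\<forall>j. fst c j = (\<Sum>i\<in>I. u i * fst (f i) j)"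
    "snd c = (\<Sum>i\<in>I. u i * snd (f i))" using cone_step.IH by blast
  obtain i0 where i0: "i0 \<in> I" "s = f i0" using cone_step.hyps(2) by blast
  define u' where "u' = (\<lambda>i. u i + (if i = i0 then l else 0))"
  have gen: "(\<Sum>i\<in>I. u' i * g i) = (\<Sum>i\<in>I. u i * g i) + l * g i0" for g :: "'a \<Rightarrow> real"
  proof -
    have "(\<Sum>i\<in>I. u' i * g i) = (\<Sum>i\<in>I. u i * g i + (if i = i0 then l * g i else 0))"
      by (rule sum.cong) (auto simp: u'_def distrib_right)
    also have "\<dots> = (\<Sum>i\<in>I. u i * g i) + (\<Sum>i\<in>I. (if i = i0 then l * g i else 0))"
      by (rule sum.distrib)
    also have "(\<Sum>i\<in>I. (if i = i0 then l * g i else 0)) = l * g i0"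
      using assms(1) i0(1) by (simp add: sum.delta)
    finally show ?thesis .
  qed
  show ?case
  proof (intro exI[of _ u'] conjI allI ballI)
    fix i assume "i \<in> I" then show "u' i \<ge> 0" using u(1) cone_step.hyps(3) by (simp add: u'_def)
  next
    fix j show "fst ((\<lambda>j. fst c j + l * fst s j), snd c + l * snd s) j = (\<Sum>i\<in>I. u' i * fst (f i) j)"
      using gen[of "\<lambda>i. fst (f i) j"] u(2) i0(2) by simp
  next
    show "snd ((\<lambda>j. fst c j + l * fst s j), snd c + l * snd s) = (\<Sum>i\<in>I. u' i * snd (f i))"
      using gen[of "\<lambda>i. snd (f i)"] u(3) i0(2) by simp
  qed
qed

lemma dotn_upd: "dotn (Suc n) a (x(n := t)) = dotn n a x + a n * t"
proof -
  have "(\<Sum>j<n. a j * (x(n := t)) j) = (\<Sum>j<n. a j * x j)"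
    by (rule sum.cong) auto
  then show ?thesis by (simp add: dotn_def)
qed

lemma fm:
  assumes "finite S" "\<not> (\<exists>x. \<forall>s\<in>S. dotn n (fst s) x \<le> snd s)"
  shows "\<exists>c\<in>cone_of S. (\<forall>j<n. fst c j = 0) \<and> snd c < 0"
  using assms
proof (induction n arbitrary: S)
  case 0
  then obtain s where s: "s \<in> S" "snd s < 0" by (force simp: dotn_def)
  have "((\<lambda>j. 0 + 1 * fst s j), 0 + 1 * snd s) \<in> cone_of S"
    using cone_of.cone_step[OF cone_of.cone_zero s(1), of 1] by simp
  then show ?case using s by force
next
  case (Suc n)
  define P where "P = {s\<in>S. fst s n > 0}"
  define N where "N = {s\<in>S. fst s n < 0}"
  define Z where "Z = {s\<in>S. fst s n = 0}"
  define comb where "comb p q = ((\<lambda>j. (- fst q n) * fst p j + fst p n * fst q j),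
      (- fst q n) * snd p + fst p n * snd q)" for p q :: "(nat \<Rightarrow> real) \<times> real"
  define S' where "S' = Z \<union> (\<lambda>(p,q). comb p q) ` (P \<times> N)"
  have finP: "finite P" and finN: "finite N" using Suc.prems(1) by (auto simp: P_def N_def)
  have fin: "finite S'" unfolding S'_def Z_def using finP finN Suc.prems(1) by auto
  have S'cone: "S' \<subseteq> cone_of S"
  proof
    fix s assume "s \<in> S'"
    then consider "s \<in> Z" | p q where "p \<in> P" "q \<in> N" "s = comb p q"
      unfolding S'_def by auto
    then show "s \<in> cone_of S"
    proof cases
      case 1
      then have "s \<in> S" by (simp add: Z_def)
      have "((\<lambda>j. 0 + 1 * fst s j), 0 + 1 * snd s) \<in> cone_of S"
        using cone_of.cone_step[OF cone_of.cone_zero \<open>s \<in> S\<close>, of 1] by simp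
      then show ?thesis by simp
    next
      case 2
      have "p \<in> S" "q \<in> S" "- fst q n \<ge> 0" "fst p n \<ge> 0" using 2 by (auto simp: P_def N_def)
      from cone_two[OF this] show ?thesis using 2(3) unfolding comb_def by simp
    qed
  qed
  have S'k: "\<forall>s\<in>S'. fst s n = 0"
    unfolding S'_def Z_def comb_def by (auto simp: algebra_simps)
  have "\<not> (\<exists>x. \<forall>s\<in>S'. dotn n (fst s) x \<le> snd s)"
  proof
    assume "\<exists>x. \<forall>s\<in>S'. dotn n (fst s) x \<le> snd s"
    then obtain x where x: "\<forall>s\<in>S'. dotn n (fst s) x \<le> snd s" by blast
    define res where "res s = snd s - dotn n (fst s) x" for s
    have key: "fst q n * res p \<le> fst p n * res q" if "p \<in> P" "q \<in> N" for p q
    proof -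
      have "comb p q \<in> S'" unfolding S'_def using that by auto
      then have "dotn n (fst (comb p q)) x \<le> snd (comb p q)" using x by blast
      moreover have "dotn n (fst (comb p q)) x = (- fst q n) * dotn n (fst p) x + fst p n * dotn n (fst q) x"
      proof -
        have "dotn n (fst (comb p q)) x = (\<Sum>j<n. (- fst q n) * (fst p j * x j) + fst p n * (fst q j * x j))"
          unfolding comb_def dotn_def by (rule sum.cong) (auto simp: algebra_simps)
        also have "\<dots> = (\<Sum>j<n. (- fst q n) * (fst p j * x j)) + (\<Sum>j<n. fst p n * (fst q j * x j))"
          by (rule sum.distrib)
        also have "\<dots> = (- fst q n) * dotn n (fst p) x + fst p n * dotn n (fst q) x"
          by (simp only: dotn_def sum_distrib_left)
        finally show ?thesis .
      qed
      ultimately show ?thesis unfolding res_def comb_def by (simp add: algebra_simps)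
    qed
    obtain t where tP: "\<forall>p\<in>P. fst p n * t \<le> res p" and tN: "\<forall>q\<in>N. fst q n * t \<le> res q"
    proof (cases "N = {}")
      case True
      show ?thesis
      proof (cases "P = {}")
        case True
        then show ?thesis using \<open>N = {}\<close> that[of 0] by simp
      next
        case False
        define t where "t = Min ((\<lambda>p. res p / fst p n) ` P)"
        have "fst p n * t \<le> res p" if "p \<in> P" for p
        proof -
          have pos: "fst p n > 0" using that by (simp add: P_def)
          have "t \<le> res p / fst p n" unfolding t_def using finP that by simp
          then show ?thesis using pos by (simp add: pos_le_divide_eq mult.commute)
        qed
        then show ?thesis using that[of t] \<open>N = {}\<close> by simp
      qed
    next
      case False
      define t where "t = Max ((\<lambda>q. res q / fst q n) ` N)"
      have tN: "fst q n * t \<le> res q" if "q \<in> N" for q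
      proof -
        have neg: "fst q n < 0" using that by (simp add: N_def)
        have "res q / fst q n \<le> t" unfolding t_def using finN that by simp
        then show ?thesis using neg by (simp add: neg_divide_le_eq mult.commute)
      qed
      have "t \<in> (\<lambda>q. res q / fst q n) ` N" unfolding t_def using finN False by (intro Max_in) auto
      then obtain q0 where q0: "q0 \<in> N" "t = res q0 / fst q0 n" by blast
      have tP: "fst p n * t \<le> res p" if "p \<in> P" for p
      proof -
        have neg: "fst q0 n < 0" using q0 by (simp add: N_def)
        have k: "fst q0 n * res p \<le> fst p n * res q0" using key[OF that q0(1)] .
        have "fst p n * t = (fst p n * res q0) / fst q0 n" using q0 by simp
        also have "\<dots> \<le> (fst q0 n * res p) / fst q0 n"
          using k neg by (intro divide_right_mono_neg) auto
        also have "\<dots> = res p" using neg by simp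
        finally show ?thesis .
      qed
      show ?thesis using that tP tN by blast
    qed
    have "\<forall>s\<in>S. dotn (Suc n) (fst s) (x(n := t)) \<le> snd s"
    proof
      fix s assume s: "s \<in> S"
      have "fst s n * t \<le> res s"
      proof (cases "fst s n > 0")
        case True then have "s \<in> P" using s by (simp add: P_def)
        then show ?thesis using tP by blast
      next
        case False
        show ?thesis
        proof (cases "fst s n < 0")
          case True then have "s \<in> N" using s by (simp add: N_def)
          then show ?thesis using tN by blast
        next
          case False
          then have "fst s n = 0" using \<open>\<not> fst s n > 0\<close> by simp
          then have "s \<in> S'" using s by (simp add: S'_def Z_def)
          then show ?thesis using x \<open>fst s n = 0\<close> by (simp add: res_def)
        qed
      qed
      then show "dotn (Suc n) (fst s) (x(n := t)) \<le> snd s"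
        by (simp add: dotn_upd res_def)
    qed
    then show False using Suc.prems(2) by blast
  qed
  from Suc.IH[OF fin this] obtain c where c: "c \<in> cone_of S'" "\<forall>j<n. fst c j = 0" "snd c < 0"
    by blast
  have "fst c n = 0" using cone_coord[OF S'k c(1)] .
  then have "\<forall>j<Suc n. fst c j = 0" using c(2) less_Suc_eq by auto
  then show ?case using cone_sub[OF S'cone c(1)] c(3) by blast
qed


lemma farkas:
  fixes A :: "nat \<Rightarrow> nat \<Rightarrow> real" and d :: "nat \<Rightarrow> real"
  assumes "\<not> (\<exists>x. feasible m n A d x)"
  shows "\<exists>v. (\<forall>r<m. v r \<ge> 0) \<and> (\<forall>j<n. (\<Sum>r<m. v r * A r j) = 0) \<and> (\<Sum>r<m. v r * d r) < 0"
proof -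
  let ?f = "\<lambda>r. (A r, d r)"
  have "\<not> (\<exists>x. \<forall>s\<in>?f ` {..<m}. dotn n (fst s) x \<le> snd s)"
    using assms by (auto simp: feasible_def dotn_def)
  from fm[OF _ this] obtain c where c: "c \<in> cone_of (?f ` {..<m})" "\<forall>j<n. fst c j = 0" "snd c < 0"
    by auto
  from cone_repr[OF finite_lessThan c(1)] obtain u where
    u: "\<forall>i\<in>{..<m}. u i \<ge> 0" "\<forall>j. fst c j = (\<Sum>i<m. u i * A i j)" "snd c = (\<Sum>i<m. u i * d i)"
    by auto
  show ?thesis using u c by (intro exI[of _ u]) auto
qed

lemma swap_lemma:
  fixes A :: "nat \<Rightarrow> nat \<Rightarrow> real"
  shows "(\<Sum>j<n. (\<Sum>r<m. v r * A r j) * x j) = (\<Sum>r<m. v r * (\<Sum>j<n. A r j * x j))"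
  by (simp add: sum_distrib_left sum_distrib_right mult.assoc) (rule sum.swap)

lemma comb_le:
  fixes A :: "nat \<Rightarrow> nat \<Rightarrow> real"
  assumes "feasible m n A d x" "\<forall>r<m. v r \<ge> 0"
  shows "(\<Sum>j<n. (\<Sum>r<m. v r * A r j) * x j) \<le> (\<Sum>r<m. v r * d r)"
  unfolding swap_lemma using assms by (intro sum_mono mult_left_mono) (auto simp: feasible_def)

lemma weak_duality:
  fixes A :: "nat \<Rightarrow> nat \<Rightarrow> real"
  assumes "feasible m n A d x" "dual_feasible m n A w u"
  shows "(\<Sum>j<n. w j * x j) \<le> (\<Sum>r<m. d r * u r)"
proof -
  have "(\<Sum>j<n. w j * x j) = (\<Sum>j<n. (\<Sum>r<m. u r * A r j) * x j)"
    using assms(2) by (intro sum.cong) (auto simp: dual_feasible_def mult.commute)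
  also have "\<dots> \<le> (\<Sum>r<m. u r * d r)"
    using assms by (intro comb_le) (auto simp: dual_feasible_def)
  finally show ?thesis by (simp add: mult.commute)
qed

lemma lp_duality:
  fixes A :: "nat \<Rightarrow> nat \<Rightarrow> real" and d w :: "nat \<Rightarrow> real"
  assumes x0: "feasible m n A d x0"
    and bnd: "\<forall>x. feasible m n A d x \<longrightarrow> (\<Sum>j<n. w j * x j) \<le> M"
  shows "\<exists>x u. feasible m n A d x \<and>
    (\<forall>x'. feasible m n A d x' \<longrightarrow> (\<Sum>j<n. w j * x' j) \<le> (\<Sum>j<n. w j * x j)) \<and>
    dual_feasible m n A w u \<and> (\<Sum>r<m. d r * u r) = (\<Sum>j<n. w j * x j)"
proof -
  define W where "W x = (\<Sum>j<n. w j * x j)" for x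
  define V where "V = W ` {x. feasible m n A d x}"
  define S where "S = Sup V"
  have ne: "V \<noteq> {}" using x0 by (auto simp: V_def)
  have bdd: "bdd_above V" using bnd by (auto simp: V_def W_def bdd_above_def)
  have upper: "W x \<le> S" if "feasible m n A d x" for x
    unfolding S_def using bdd that by (intro cSup_upper) (auto simp: V_def)
  have least: "S \<le> B" if "\<forall>x. feasible m n A d x \<longrightarrow> W x \<le> B" for B
    unfolding S_def using ne that by (intro cSup_least) (auto simp: V_def)
  define A' where "A' r j = (if r < m then A r j else - w j)" for r j
  define d' where "d' r = (if r < m then d r else - S)" for r
  have "\<exists>x. feasible (Suc m) n A' d' x"
  proof (rule ccontr)
    assume "\<not> ?thesis"
    from farkas[OF this] obtain v where v: "\<forall>r<Suc m. v r \<ge> 0"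
      "\<forall>j<n. (\<Sum>r<Suc m. v r * A' r j) = 0" "(\<Sum>r<Suc m. v r * d' r) < 0" by blast
    have eA: "(\<Sum>r<m. v r * A' r j) = (\<Sum>r<m. v r * A r j)" for j
      by (intro sum.cong) (auto simp: A'_def)
    have ed: "(\<Sum>r<m. v r * d' r) = (\<Sum>r<m. v r * d r)"
      by (intro sum.cong) (auto simp: d'_def)
    have v2: "(\<Sum>r<m. v r * A r j) = v m * w j" if "j < n" for j
      using v(2) that eA[of j] by (simp add: A'_def)
    have v3: "(\<Sum>r<m. v r * d r) < v m * S" using v(3) ed by (simp add: d'_def)
    have vpos: "\<forall>r<m. v r \<ge> 0" using v(1) by auto
    have key: "v m * W x \<le> (\<Sum>r<m. v r * d r)" if "feasible m n A d x" for x
    proof -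
      have "v m * W x = (\<Sum>j<n. (\<Sum>r<m. v r * A r j) * x j)"
        unfolding W_def sum_distrib_left using v2 by (intro sum.cong) auto
      also have "\<dots> \<le> (\<Sum>r<m. v r * d r)" using comb_le[OF that vpos] .
      finally show ?thesis .
    qed
    show False
    proof (cases "v m = 0")
      case True
      then show False using key[OF x0] v3 by simp
    next
      case False
      then have lpos: "v m > 0" using v(1) by (metis le_less lessI)
      have "\<forall>x. feasible m n A d x \<longrightarrow> W x \<le> (\<Sum>r<m. v r * d r) / v m"
        using key lpos by (auto simp: pos_le_divide_eq mult.commute)
      from least[OF this] have "S * v m \<le> (\<Sum>r<m. v r * d r)" using lpos by (simp add: pos_le_divide_eq)
      then show False using v3 by (simp add: mult.commute)
    qed
  qed
  then obtain xs where xs: "feasible (Suc m) n A' d' xs" by blast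
  have xsf: "feasible m n A d xs"
  proof -
    have "(\<Sum>j<n. A r j * xs j) \<le> d r" if "r < m" for r
    proof -
      have "(\<Sum>j<n. A' r j * xs j) \<le> d' r" using xs that by (simp add: feasible_def)
      then show ?thesis using that by (simp add: A'_def d'_def)
    qed
    then show ?thesis by (simp add: feasible_def)
  qed
  have "(\<Sum>j<n. A' m j * xs j) \<le> d' m" using xs unfolding feasible_def by blast
  then have "- W xs \<le> - S" by (simp add: A'_def d'_def W_def sum_negf)
  then have WS: "W xs = S" using upper[OF xsf] by simp
  define H where "H r j = (if r < m then (if j < n then A r j else - d r)
      else if r = m then (if j < n then 0 else -1) else (if j < n then - w j else S))" for r j
  define e where "e r = (if r = Suc m then -1 else (0::real))" for r
  have "\<not> (\<exists>z. feasible (Suc (Suc m)) (Suc n) H e z)"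
  proof
    assume "\<exists>z. feasible (Suc (Suc m)) (Suc n) H e z"
    then obtain z where z: "feasible (Suc (Suc m)) (Suc n) H e z" by blast
    have row: "(\<Sum>j<n. H r j * z j) + H r n * z n \<le> e r" if "r < Suc (Suc m)" for r
      using z that by (simp add: feasible_def)
    have rowA: "(\<Sum>j<n. A r j * z j) - d r * z n \<le> 0" if "r < m" for r
    proof -
      have "(\<Sum>j<n. H r j * z j) = (\<Sum>j<n. A r j * z j)"
        using that by (intro sum.cong) (auto simp: H_def)
      then show ?thesis using row[of r] that by (simp add: H_def e_def)
    qed
    have tpos: "z n \<ge> 0" using row[of m] by (simp add: H_def e_def)
    have rowW: "- W z + S * z n \<le> -1"
    proof -
      have "(\<Sum>j<n. H (Suc m) j * z j) = - W z"
        unfolding W_def sum_negf[symmetric] by (intro sum.cong) (auto simp: H_def)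
      then show ?thesis using row[of "Suc m"] by (simp add: H_def e_def)
    qed
    define p where "p j = (z j + xs j) / (z n + 1)" for j
    have tp: "z n + 1 > 0" using tpos by simp
    have lin: "(\<Sum>j<n. a j * p j) = ((\<Sum>j<n. a j * z j) + (\<Sum>j<n. a j * xs j)) / (z n + 1)" for a
      unfolding p_def sum.distrib[symmetric] sum_divide_distrib
      by (intro sum.cong) (auto simp: algebra_simps add_divide_distrib)
    have "feasible m n A d p"
      unfolding feasible_def
    proof (intro allI impI)
      fix r assume r: "r < m"
      have "(\<Sum>j<n. A r j * z j) + (\<Sum>j<n. A r j * xs j) \<le> d r * z n + d r"
        using rowA[OF r] xsf r by (auto simp: feasible_def)
      then have "(\<Sum>j<n. A r j * p j) \<le> (d r * z n + d r) / (z n + 1)"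
        unfolding lin using tp by (intro divide_right_mono) auto
      also have "\<dots> = d r" using tp by (simp add: field_simps)
      finally show "(\<Sum>j<n. A r j * p j) \<le> d r" .
    qed
    from upper[OF this] have "W p \<le> S" .
    moreover have "W p = (W z + W xs) / (z n + 1)" unfolding W_def lin ..
    ultimately have "W z + S \<le> S * (z n + 1)" using tp WS by (simp add: divide_le_eq)
    then show False using rowW by (simp add: algebra_simps)
  qed
  from farkas[OF this] obtain v where v: "\<forall>r<Suc (Suc m). v r \<ge> 0"
    "\<forall>j<Suc n. (\<Sum>r<Suc (Suc m). v r * H r j) = 0" "(\<Sum>r<Suc (Suc m). v r * e r) < 0" by blast
  define \<beta> where "\<beta> = v (Suc m)"
  have be: "(\<Sum>r<m. v r * e r) = 0" by (intro sum.neutral) (auto simp: e_def)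
  have bpos: "\<beta> > 0" using v(3) be by (simp add: e_def \<beta>_def)
  have vA: "(\<Sum>r<m. v r * A r j) = \<beta> * w j" if "j < n" for j
  proof -
    have "(\<Sum>r<m. v r * H r j) = (\<Sum>r<m. v r * A r j)"
      using that by (intro sum.cong) (auto simp: H_def)
    moreover have "(\<Sum>r<m. v r * H r j) + v m * H m j + v (Suc m) * H (Suc m) j = 0"
      using v(2) that by simp
    ultimately have "(\<Sum>r<m. v r * A r j) + v m * H m j + v (Suc m) * H (Suc m) j = 0"
      by simp
    then show ?thesis using that by (simp add: H_def \<beta>_def)
  qed
  have vd: "(\<Sum>r<m. v r * d r) = \<beta> * S - v m"
  proof -
    have "(\<Sum>r<m. v r * H r n) = - (\<Sum>r<m. v r * d r)"
      unfolding sum_negf[symmetric] by (intro sum.cong) (auto simp: H_def)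
    moreover have "(\<Sum>r<m. v r * H r n) + v m * H m n + v (Suc m) * H (Suc m) n = 0"
      using v(2) by simp
    ultimately have "- (\<Sum>r<m. v r * d r) + v m * H m n + v (Suc m) * H (Suc m) n = 0"
      by simp
    then show ?thesis by (simp add: H_def \<beta>_def)
  qed
  define u where "u r = v r / \<beta>" for r
  have df: "dual_feasible m n A w u"
    unfolding dual_feasible_def
  proof (intro conjI allI impI)
    fix r assume "r < m" then show "u r \<ge> 0" using v(1) bpos by (simp add: u_def)
  next
    fix j assume j: "j < n"
    have "(\<Sum>r<m. A r j * u r) = (\<Sum>r<m. v r * A r j) / \<beta>"
      unfolding u_def sum_divide_distrib by (intro sum.cong) auto
    then show "(\<Sum>r<m. A r j * u r) = w j" using vA[OF j] bpos by simp
  qed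
  have "(\<Sum>r<m. d r * u r) = (\<Sum>r<m. v r * d r) / \<beta>"
    unfolding u_def sum_divide_distrib by (intro sum.cong) auto
  also have "\<dots> \<le> S" using vd bpos v(1) by (simp add: divide_le_eq)
  finally have "(\<Sum>r<m. d r * u r) \<le> S" .
  moreover have "W xs \<le> (\<Sum>r<m. d r * u r)" unfolding W_def by (rule weak_duality[OF xsf df])
  ultimately have "(\<Sum>r<m. d r * u r) = W xs" using WS by simp
  then show ?thesis using xsf df upper WS unfolding W_def by blast
qed


definition objv :: "nat \<Rightarrow> (nat \<Rightarrow> int) \<Rightarrow> real \<Rightarrow> nat \<Rightarrow> real" where
  "objv n wi t j = (if j < n then of_int (wi j) else t)"

lemma sys_sum:
  "(\<Sum>j<Suc n. sys_mat n A b r j * x j) = (\<Sum>j<n. of_int (A r j) * x j) + of_int (b r) * x n"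
proof -
  have "(\<Sum>j<n. sys_mat n A b r j * x j) = (\<Sum>j<n. of_int (A r j) * x j)"
    by (intro sum.cong) (auto simp: sys_mat_def)
  then show ?thesis by (simp add: sys_mat_def)
qed

lemma affine_int:
  fixes G :: "real \<Rightarrow> real" and k :: int
  assumes i1: "G (of_int k) \<in> \<int>" and i2: "G (of_int k + 1) \<in> \<int>"
    and mono: "\<And>t s. t \<le> s \<Longrightarrow> G t \<le> G s \<and> G s \<le> G t + (s - t)"
    and t: "of_int k \<le> t" "t \<le> of_int k + 1"
  shows "G t = G (of_int k) + (G (of_int k + 1) - G (of_int k)) * (t - of_int k)"
proof -
  obtain a where a: "G (of_int k) = of_int a" using i1 by (auto elim: Ints_cases)
  obtain a' where a': "G (of_int k + 1) = of_int a'" using i2 by (auto elim: Ints_cases)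
  have m1: "G (of_int k) \<le> G t" "G t \<le> G (of_int k) + (t - of_int k)" using mono[OF t(1)] by auto
  have m2: "G t \<le> G (of_int k + 1)" "G (of_int k + 1) \<le> G t + (of_int k + 1 - t)" using mono[OF t(2)] by auto
  have "G (of_int k) \<le> G (of_int k + 1)" "G (of_int k + 1) \<le> G (of_int k) + 1"
    using mono[of "of_int k" "of_int k + 1"] by auto
  then have "a \<le> a'" "a' \<le> a + 1" using a a' by linarith+
  then consider "a' = a" | "a' = a + 1" by linarith
  then show ?thesis
  proof cases
    case 1 then show ?thesis using m1 m2 a a' by simp
  next
    case 2 then show ?thesis using m1 m2 a a' by simp
  qed
qed

locale subsys =
  fixes m n :: nat and A :: "nat \<Rightarrow> nat \<Rightarrow> int" and b d wi :: "nat \<Rightarrow> int"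
    and x0 u0 :: "nat \<Rightarrow> real" and c0 :: real
  assumes tdi: "TDI m (Suc n) (sys_mat n A b) (\<lambda>r. of_int (d r))"
    and bnd: "\<And>(x :: nat \<Rightarrow> real) (y :: real).
       (\<forall>r<m. (\<Sum>j<n. of_int (A r j) * x j) + of_int (b r) * y \<le> of_int (d r))
       \<Longrightarrow> 0 \<le> y \<and> y \<le> 1"
    and feas0: "feasible m (Suc n) (sys_mat n A b) (\<lambda>r. of_int (d r)) x0"
    and dual0: "dual_feasible m (Suc n) (sys_mat n A b) (objv n wi c0) u0"
begin

abbreviation "PP x \<equiv> feasible m (Suc n) (sys_mat n A b) (\<lambda>r. of_int (d r)) x"

definition obj :: "real \<Rightarrow> (nat \<Rightarrow> real) \<Rightarrow> real" where
  "obj t x = (\<Sum>j<n. of_int (wi j) * x j) + t * x n"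

definition G :: "real \<Rightarrow> real" where
  "G t = Sup ((obj t) ` {x. PP x})"

lemma obj_eq: "(\<Sum>j<Suc n. objv n wi t j * x j) = obj t x"
proof -
  have "(\<Sum>j<n. objv n wi t j * x j) = (\<Sum>j<n. of_int (wi j) * x j)"
    by (intro sum.cong) (auto simp: objv_def)
  then show ?thesis by (simp add: objv_def obj_def)
qed

lemma feas_y: "PP x \<Longrightarrow> 0 \<le> x n \<and> x n \<le> 1"
  by (rule bnd[of x]) (simp add: feasible_def sys_sum del: sum.lessThan_Suc)

lemma bounded: "PP x \<Longrightarrow> obj t x \<le> (\<Sum>r<m. of_int (d r) * u0 r) + \<bar>t - c0\<bar>"
proof -
  assume x: "PP x"
  have "obj c0 x \<le> (\<Sum>r<m. of_int (d r) * u0 r)"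
    using weak_duality[OF x dual0] by (simp only: obj_eq)
  moreover have "(t - c0) * x n \<le> \<bar>t - c0\<bar>"
  proof -
    have "(t - c0) * x n \<le> \<bar>t - c0\<bar> * x n" using feas_y[OF x] by (intro mult_right_mono) auto
    also have "\<dots> \<le> \<bar>t - c0\<bar>" using feas_y[OF x] by (simp add: mult_left_le)
    finally show ?thesis .
  qed
  moreover have "obj t x = obj c0 x + (t - c0) * x n" by (simp add: obj_def algebra_simps)
  ultimately show ?thesis by simp
qed

lemma G_attained:
  "\<exists>x u. PP x \<and> obj t x = G t \<and> (\<forall>x'. PP x' \<longrightarrow> obj t x' \<le> G t) \<and>
     dual_feasible m (Suc n) (sys_mat n A b) (objv n wi t) u \<and> (\<Sum>r<m. of_int (d r) * u r) = G t"
proof -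
  have "\<forall>x. PP x \<longrightarrow> (\<Sum>j<Suc n. objv n wi t j * x j) \<le> (\<Sum>r<m. of_int (d r) * u0 r) + \<bar>t - c0\<bar>"
    using bounded by (simp add: obj_eq del: sum.lessThan_Suc)
  from lp_duality[OF feas0 this] obtain x u where xu: "PP x"
    "\<forall>x'. PP x' \<longrightarrow> obj t x' \<le> obj t x"
    "dual_feasible m (Suc n) (sys_mat n A b) (objv n wi t) u" "(\<Sum>r<m. of_int (d r) * u r) = obj t x"
    by (auto simp: obj_eq simp del: sum.lessThan_Suc)
  have "G t = obj t x" unfolding G_def using xu(1,2) by (intro cSup_eq_maximum) auto
  then show ?thesis using xu by auto
qed

lemma G_int:
  "\<exists>u::nat \<Rightarrow> int. dual_feasible m (Suc n) (sys_mat n A b) (objv n wi (of_int k)) (\<lambda>r. of_int (u r))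
     \<and> (\<Sum>r<m. of_int (d r) * of_int (u r)) = G (of_int k)"
proof -
  define w' where "w' j = (if j < n then wi j else k)" for j
  have ww: "(\<lambda>j. of_int (w' j) :: real) = objv n wi (of_int k)"
    by (auto simp: w'_def objv_def)
  obtain x ur where x: "PP x" "obj (of_int k) x = G (of_int k)" "\<forall>x'. PP x' \<longrightarrow> obj (of_int k) x' \<le> G (of_int k)"
    "dual_feasible m (Suc n) (sys_mat n A b) (objv n wi (of_int k)) ur"
    "(\<Sum>r<m. of_int (d r) * ur r) = G (of_int k)"
    using G_attained by blast
  have "\<exists>x. PP x \<and> (\<forall>x'. PP x' \<longrightarrow> (\<Sum>j<Suc n. of_int (w' j) * x' j) \<le> (\<Sum>j<Suc n. of_int (w' j) * x j))"
  proof -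
    have ww': "(\<Sum>j<Suc n. of_int (w' j) * y j) = obj (of_int k) y" for y
      unfolding obj_eq[symmetric] by (intro sum.cong) (auto simp: ww[symmetric])
    show ?thesis unfolding ww' using x(1-3) by auto
  qed
  with tdi obtain u :: "nat \<Rightarrow> int" where u:
    "dual_feasible m (Suc n) (sys_mat n A b) (\<lambda>j. of_int (w' j)) (\<lambda>r. of_int (u r))"
    "\<forall>u'. dual_feasible m (Suc n) (sys_mat n A b) (\<lambda>j. of_int (w' j)) u' \<longrightarrow>
        (\<Sum>r<m. of_int (d r) * of_int (u r)) \<le> (\<Sum>r<m. of_int (d r) * u' r)"
    unfolding TDI_def by blast
  have u1: "dual_feasible m (Suc n) (sys_mat n A b) (objv n wi (of_int k)) (\<lambda>r. of_int (u r))"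
    using u(1) unfolding ww .
  have "(\<Sum>r<m. of_int (d r) * of_int (u r)) \<le> G (of_int k)"
    using u(2) x(4,5) unfolding ww by auto
  moreover have "G (of_int k) \<le> (\<Sum>r<m. of_int (d r) * of_int (u r))"
    using weak_duality[OF x(1) u1] x(2) by (simp only: obj_eq)
  ultimately show ?thesis using u1 by (intro exI[of _ u]) auto
qed

lemma G_Ints: "G (of_int k) \<in> \<int>"
proof -
  obtain u :: "nat \<Rightarrow> int" where "(\<Sum>r<m. of_int (d r) * of_int (u r)) = G (of_int k)"
    using G_int by blast
  then have "G (of_int k) = of_int (\<Sum>r<m. d r * u r)" by simp
  then show ?thesis by (metis Ints_of_int)
qed

lemma G_mono:
  assumes "t \<le> s" shows "G t \<le> G s \<and> G s \<le> G t + (s - t)"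
proof -
  obtain xt where xt: "PP xt" "obj t xt = G t" "\<forall>x'. PP x' \<longrightarrow> obj t x' \<le> G t"
    using G_attained by blast
  obtain xs where xs: "PP xs" "obj s xs = G s" "\<forall>x'. PP x' \<longrightarrow> obj s x' \<le> G s"
    using G_attained by blast
  have "obj s xt = obj t xt + (s - t) * xt n" by (simp add: obj_def algebra_simps)
  moreover have "(s - t) * xt n \<ge> 0" using feas_y[OF xt(1)] assms by simp
  moreover have "obj s xt \<le> G s" using xs(3) xt(1) by blast
  moreover have "obj s xs = obj t xs + (s - t) * xs n" by (simp add: obj_def algebra_simps)
  moreover have "(s - t) * xs n \<le> s - t" using feas_y[OF xs(1)] assms by (simp add: mult_left_le)
  moreover have "obj t xs \<le> G t" using xt(3) xs(1) by blast
  ultimately show ?thesis using xt(2) xs(2) by linarith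
qed

lemma G_affine:
  assumes "of_int k \<le> t" "t \<le> of_int k + 1"
  shows "G t = G (of_int k) + (G (of_int k + 1) - G (of_int k)) * (t - of_int k)"
proof -
  have "G (of_int (k + 1)) \<in> \<int>" by (rule G_Ints)
  then have "G (of_int k + 1) \<in> \<int>" by simp
  from affine_int[OF G_Ints this G_mono assms] show ?thesis .
qed

end


lemma sum_split_add:
  fixes f :: "nat \<Rightarrow> 'a::comm_monoid_add"
  shows "(\<Sum>j<a+b. f j) = (\<Sum>j<a. f j) + (\<Sum>j<b. f (a+j))"
  by (induction b) (simp_all add: add.assoc)

lemma sys_dual_iff:
  "dual_feasible m (Suc n) (sys_mat n A b) (objv n wi t) u \<longleftrightarrow>
    (\<forall>r<m. 0 \<le> u r) \<and> (\<forall>j<n. (\<Sum>r<m. of_int (A r j) * u r) = of_int (wi j))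
    \<and> (\<Sum>r<m. of_int (b r) * u r) = t"
proof -
  have 1: "(\<Sum>r<m. sys_mat n A b r j * u r) = (\<Sum>r<m. of_int (A r j) * u r)" if "j < n" for j
    using that by (simp add: sys_mat_def)
  have 2: "(\<Sum>r<m. sys_mat n A b r n * u r) = (\<Sum>r<m. of_int (b r) * u r)"
    by (simp add: sys_mat_def)
  show ?thesis unfolding dual_feasible_def using 1 2 by (auto simp: objv_def less_Suc_eq)
qed

context
  fixes m1 n1 m2 n2 :: nat and A1 A2 :: "nat \<Rightarrow> nat \<Rightarrow> int" and b1 b2 :: "nat \<Rightarrow> int"
begin

abbreviation "CC \<equiv> comb_mat m1 n1 n2 A1 b1 A2 b2"

lemma comb_row1:
  assumes "r < m1"
  shows "(\<Sum>j<n1+n2+1. CC r j * x j) = (\<Sum>j<n1. of_int (A1 r j) * x j) + of_int (b1 r) * x (n1+n2)"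
proof -
  have "(\<Sum>j<n1+n2+1. CC r j * x j) = (\<Sum>j<n1+n2. CC r j * x j) + CC r (n1+n2) * x (n1+n2)"
    by simp
  also have "(\<Sum>j<n1+n2. CC r j * x j) = (\<Sum>j<n1. CC r j * x j) + (\<Sum>j<n2. CC r (n1+j) * x (n1+j))"
    by (rule sum_split_add)
  also have "(\<Sum>j<n1. CC r j * x j) = (\<Sum>j<n1. of_int (A1 r j) * x j)"
    using assms by (intro sum.cong) (auto simp: comb_mat_def)
  also have "(\<Sum>j<n2. CC r (n1+j) * x (n1+j)) = 0"
    using assms by (intro sum.neutral) (auto simp: comb_mat_def)
  finally show ?thesis using assms by (simp add: comb_mat_def)
qed

lemma comb_row2:
  assumes "r < m2"
  shows "(\<Sum>j<n1+n2+1. CC (m1+r) j * x j) = (\<Sum>j<n2. of_int (A2 r j) * x (n1+j)) + of_int (b2 r) * x (n1+n2)"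
proof -
  have "(\<Sum>j<n1+n2+1. CC (m1+r) j * x j) = (\<Sum>j<n1+n2. CC (m1+r) j * x j) + CC (m1+r) (n1+n2) * x (n1+n2)"
    by simp
  also have "(\<Sum>j<n1+n2. CC (m1+r) j * x j) = (\<Sum>j<n1. CC (m1+r) j * x j) + (\<Sum>j<n2. CC (m1+r) (n1+j) * x (n1+j))"
    by (rule sum_split_add)
  also have "(\<Sum>j<n1. CC (m1+r) j * x j) = 0"
    by (intro sum.neutral) (auto simp: comb_mat_def)
  also have "(\<Sum>j<n2. CC (m1+r) (n1+j) * x (n1+j)) = (\<Sum>j<n2. of_int (A2 r j) * x (n1+j))"
    by (intro sum.cong) (auto simp: comb_mat_def)
  finally show ?thesis by (simp add: comb_mat_def)
qed

lemma comb_col1: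
  assumes "j < n1"
  shows "(\<Sum>r<m1+m2. CC r j * v r) = (\<Sum>r<m1. of_int (A1 r j) * v r)"
proof -
  have a: "(\<Sum>r<m1. CC r j * v r) = (\<Sum>r<m1. of_int (A1 r j) * v r)"
    using assms by (intro sum.cong) (auto simp: comb_mat_def)
  have b: "(\<Sum>r<m2. CC (m1+r) j * v (m1+r)) = 0"
    using assms by (intro sum.neutral) (auto simp: comb_mat_def)
  show ?thesis unfolding sum_split_add[of _ m1 m2] a b by simp
qed

lemma comb_col2:
  assumes "j < n2"
  shows "(\<Sum>r<m1+m2. CC r (n1+j) * v r) = (\<Sum>r<m2. of_int (A2 r j) * v (m1+r))"
proof -
  have a: "(\<Sum>r<m1. CC r (n1+j) * v r) = 0"
    using assms by (intro sum.neutral) (auto simp: comb_mat_def)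
  have b: "(\<Sum>r<m2. CC (m1+r) (n1+j) * v (m1+r)) = (\<Sum>r<m2. of_int (A2 r j) * v (m1+r))"
    using assms by (intro sum.cong) (auto simp: comb_mat_def)
  show ?thesis unfolding sum_split_add[of _ m1 m2] a b by simp
qed

lemma comb_col3:
  "(\<Sum>r<m1+m2. CC r (n1+n2) * v r) = (\<Sum>r<m1. of_int (b1 r) * v r) + (\<Sum>r<m2. of_int (b2 r) * v (m1+r))"
proof -
  have a: "(\<Sum>r<m1. CC r (n1+n2) * v r) = (\<Sum>r<m1. of_int (b1 r) * v r)"
    by (intro sum.cong) (auto simp: comb_mat_def)
  have b: "(\<Sum>r<m2. CC (m1+r) (n1+n2) * v (m1+r)) = (\<Sum>r<m2. of_int (b2 r) * v (m1+r))"
    by (intro sum.cong) (auto simp: comb_mat_def)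
  show ?thesis unfolding sum_split_add[of _ m1 m2] a b by simp
qed

end

lemma comb_rhs_sum:
  "(\<Sum>r<m1+m2. comb_rhs m1 d1 d2 r * v r) = (\<Sum>r<m1. of_int (d1 r) * v r) + (\<Sum>r<m2. of_int (d2 r) * v (m1+r))"
proof -
  have a: "(\<Sum>r<m1. comb_rhs m1 d1 d2 r * v r) = (\<Sum>r<m1. of_int (d1 r) * v r)"
    by (intro sum.cong) (auto simp: comb_rhs_def)
  have b: "(\<Sum>r<m2. comb_rhs m1 d1 d2 (m1+r) * v (m1+r)) = (\<Sum>r<m2. of_int (d2 r) * v (m1+r))"
    by (intro sum.cong) (auto simp: comb_rhs_def)
  show ?thesis unfolding sum_split_add[of _ m1 m2] a b by simp
qed

lemma obj_split:
  fixes f :: "nat \<Rightarrow> 'a::comm_monoid_add" and n1 n2 :: nat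
  shows "(\<Sum>j<n1+n2+1. f j) = (\<Sum>j<n1. f j) + (\<Sum>j<n2. f (n1+j)) + f (n1+n2)"
  using sum_split_add[of f n1 n2] by simp

lemma min_conv:
  fixes a b \<theta> :: real
  assumes "0 \<le> \<theta>" "\<theta> \<le> 1"
  shows "min a b \<le> (1 - \<theta>) * a + \<theta> * b"
proof -
  have "(1 - \<theta>) * min a b \<le> (1 - \<theta>) * a" using assms by (intro mult_left_mono) auto
  moreover have "\<theta> * min a b \<le> \<theta> * b" using assms by (intro mult_left_mono) auto
  ultimately show ?thesis by (simp add: algebra_simps)
qed


theorem proposition3p9:
  fixes m1 n1 m2 n2 :: nat
    and A1 A2 :: "nat \<Rightarrow> nat \<Rightarrow> int" and b1 d1 b2 d2 :: "nat \<Rightarrow> int"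
  assumes tdi1: "TDI m1 (Suc n1) (sys_mat n1 A1 b1) (\<lambda>r. of_int (d1 r))"
    and tdi2: "TDI m2 (Suc n2) (sys_mat n2 A2 b2) (\<lambda>r. of_int (d2 r))"
    and bnd1: "\<And>(x :: nat \<Rightarrow> real) (y :: real).
       (\<forall>r<m1. (\<Sum>j<n1. of_int (A1 r j) * x j) + of_int (b1 r) * y \<le> of_int (d1 r))
       \<Longrightarrow> 0 \<le> y \<and> y \<le> 1"
    and bnd2: "\<And>(x :: nat \<Rightarrow> real) (y :: real).
       (\<forall>r<m2. (\<Sum>j<n2. of_int (A2 r j) * x j) + of_int (b2 r) * y \<le> of_int (d2 r))
       \<Longrightarrow> 0 \<le> y \<and> y \<le> 1"
  shows "TDI (m1 + m2) (n1 + n2 + 1) (comb_mat m1 n1 n2 A1 b1 A2 b2) (comb_rhs m1 d1 d2)"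
  unfolding TDI_def
proof (intro allI impI)
  let ?C = "comb_mat m1 n1 n2 A1 b1 A2 b2" and ?D = "comb_rhs m1 d1 d2"
  let ?F = "feasible (m1 + m2) (n1 + n2 + 1) ?C ?D"
  fix w :: "nat \<Rightarrow> int"
  assume "\<exists>x. ?F x \<and> (\<forall>x'. ?F x' \<longrightarrow> (\<Sum>j<n1 + n2 + 1. of_int (w j) * x' j) \<le> (\<Sum>j<n1 + n2 + 1. of_int (w j) * x j))"
  then obtain x0 where x0: "?F x0" "\<forall>x'. ?F x' \<longrightarrow> (\<Sum>j<n1 + n2 + 1. of_int (w j) * x' j) \<le> (\<Sum>j<n1 + n2 + 1. of_int (w j) * x0 j)"
    by blast
  from lp_duality[OF x0(1) x0(2)] obtain xs u where xs: "?F xs"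
    "\<forall>x'. ?F x' \<longrightarrow> (\<Sum>j<n1 + n2 + 1. of_int (w j) * x' j) \<le> (\<Sum>j<n1 + n2 + 1. of_int (w j) * xs j)"
    and du: "dual_feasible (m1 + m2) (n1 + n2 + 1) ?C (\<lambda>j. of_int (w j)) u"
    and val: "(\<Sum>r<m1+m2. ?D r * u r) = (\<Sum>j<n1 + n2 + 1. of_int (w j) * xs j)"
    by blast
  define OPT where "OPT = (\<Sum>j<n1 + n2 + 1. of_int (w j) * xs j)"
  define w2 where "w2 j = w (n1 + j)" for j
  define c where "c = w (n1 + n2)"
  define x1 where "x1 j = (if j < n1 then xs j else xs (n1 + n2))" for j
  define x2 where "x2 j = (if j < n2 then xs (n1 + j) else xs (n1 + n2))" for j
  define u2 where "u2 r = u (m1 + r)" for r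
  define c1 where "c1 = (\<Sum>r<m1. of_int (b1 r) * u r)"
  have xsrow: "\<forall>r<m1+m2. (\<Sum>j<n1+n2+1. ?C r j * xs j) \<le> ?D r" using xs(1) by (simp add: feasible_def del: sum.lessThan_Suc)
  have f1: "feasible m1 (Suc n1) (sys_mat n1 A1 b1) (\<lambda>r. of_int (d1 r)) x1"
    unfolding feasible_def sys_sum
  proof (intro allI impI)
    fix r assume r: "r < m1"
    have "(\<Sum>j<n1. of_int (A1 r j) * x1 j) = (\<Sum>j<n1. of_int (A1 r j) * xs j)"
      by (intro sum.cong) (auto simp: x1_def)
    moreover have "r < m1 + m2" using r by simp
    then have "(\<Sum>j<n1+n2+1. ?C r j * xs j) \<le> ?D r" using xsrow by blast
    then have "(\<Sum>j<n1. of_int (A1 r j) * xs j) + of_int (b1 r) * xs (n1+n2) \<le> of_int (d1 r)"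
      unfolding comb_row1[OF r] using r by (simp add: comb_rhs_def)
    ultimately show "(\<Sum>j<n1. of_int (A1 r j) * x1 j) + of_int (b1 r) * x1 n1 \<le> of_int (d1 r)"
      by (simp add: x1_def)
  qed
  have f2: "feasible m2 (Suc n2) (sys_mat n2 A2 b2) (\<lambda>r. of_int (d2 r)) x2"
    unfolding feasible_def sys_sum
  proof (intro allI impI)
    fix r assume r: "r < m2"
    have "(\<Sum>j<n2. of_int (A2 r j) * x2 j) = (\<Sum>j<n2. of_int (A2 r j) * xs (n1 + j))"
      by (intro sum.cong) (auto simp: x2_def)
    moreover have "m1 + r < m1 + m2" using r by simp
    then have "(\<Sum>j<n1+n2+1. ?C (m1 + r) j * xs j) \<le> ?D (m1 + r)" using xsrow by blast
    then have "(\<Sum>j<n2. of_int (A2 r j) * xs (n1 + j)) + of_int (b2 r) * xs (n1+n2) \<le> of_int (d2 r)"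
      unfolding comb_row2[OF r] by (simp add: comb_rhs_def)
    ultimately show "(\<Sum>j<n2. of_int (A2 r j) * x2 j) + of_int (b2 r) * x2 n2 \<le> of_int (d2 r)"
      by (simp add: x2_def)
  qed
  have dcol: "(\<Sum>r<m1+m2. ?C r j * u r) = of_int (w j)" if "j < n1 + n2 + 1" for j
    using du that by (simp add: dual_feasible_def del: sum.lessThan_Suc)
  have unonneg: "\<forall>r<m1+m2. 0 \<le> u r" using du by (simp add: dual_feasible_def)
  have dual1: "dual_feasible m1 (Suc n1) (sys_mat n1 A1 b1) (objv n1 w c1) u"
    unfolding sys_dual_iff
  proof (intro conjI allI impI)
    fix r assume "r < m1" then show "0 \<le> u r" using unonneg by simp
  next
    fix j assume j: "j < n1"
    show "(\<Sum>r<m1. of_int (A1 r j) * u r) = of_int (w j)"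
      using dcol[of j] j comb_col1[OF j, where v=u] by simp
  qed (simp add: c1_def)
  have dual2: "dual_feasible m2 (Suc n2) (sys_mat n2 A2 b2) (objv n2 w2 (of_int c - c1)) u2"
    unfolding sys_dual_iff
  proof (intro conjI allI impI)
    fix r assume "r < m2" then show "0 \<le> u2 r" using unonneg by (simp add: u2_def)
  next
    fix j assume j: "j < n2"
    show "(\<Sum>r<m2. of_int (A2 r j) * u2 r) = of_int (w2 j)"
      using dcol[of "n1 + j"] j comb_col2[OF j, where v=u] by (simp add: u2_def w2_def)
  next
    show "(\<Sum>r<m2. of_int (b2 r) * u2 r) = of_int c - c1"
      using dcol[of "n1 + n2"] comb_col3[where v=u] by (simp add: u2_def c_def c1_def)
  qed
  interpret S1: subsys m1 n1 A1 b1 d1 w x1 u c1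
    using tdi1 bnd1 f1 dual1 by unfold_locales
  interpret S2: subsys m2 n2 A2 b2 d2 w2 x2 u2 "of_int c - c1"
    using tdi2 bnd2 f2 dual2 by unfold_locales
  have OPT_split: "OPT = S1.obj t x1 + S2.obj (of_int c - t) x2" for t
  proof -
    have a: "(\<Sum>j<n1. of_int (w j) * x1 j) = (\<Sum>j<n1. of_int (w j) * xs j)"
      by (intro sum.cong) (auto simp: x1_def)
    have b: "(\<Sum>j<n2. of_int (w2 j) * x2 j) = (\<Sum>j<n2. of_int (w (n1 + j)) * xs (n1 + j))"
      by (intro sum.cong) (auto simp: x2_def w2_def)
    show ?thesis unfolding OPT_def obj_split S1.obj_def S2.obj_def a b
      by (simp add: x1_def x2_def c_def algebra_simps)
  qed
  have lower: "OPT \<le> S1.G t + S2.G (of_int c - t)" for t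
  proof -
    obtain y1 where "\<forall>x'. S1.PP x' \<longrightarrow> S1.obj t x' \<le> S1.G t" using S1.G_attained by blast
    then have 1: "S1.obj t x1 \<le> S1.G t" using f1 by blast
    obtain y2 where "\<forall>x'. S2.PP x' \<longrightarrow> S2.obj (of_int c - t) x' \<le> S2.G (of_int c - t)" using S2.G_attained by blast
    then have 2: "S2.obj (of_int c - t) x2 \<le> S2.G (of_int c - t)" using f2 by blast
    show ?thesis using 1 2 OPT_split[of t] by simp
  qed
  have upper: "S1.G c1 + S2.G (of_int c - c1) \<le> OPT"
  proof -
    obtain y1 where y1: "S1.PP y1" "S1.obj c1 y1 = S1.G c1" using S1.G_attained by blast
    have 1: "S1.G c1 \<le> (\<Sum>r<m1. of_int (d1 r) * u r)"
      using weak_duality[OF y1(1) dual1] y1(2) by (simp only: S1.obj_eq)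
    obtain y2 where y2: "S2.PP y2" "S2.obj (of_int c - c1) y2 = S2.G (of_int c - c1)" using S2.G_attained by blast
    have 2: "S2.G (of_int c - c1) \<le> (\<Sum>r<m2. of_int (d2 r) * u2 r)"
      using weak_duality[OF y2(1) dual2] y2(2) by (simp only: S2.obj_eq)
    have "OPT = (\<Sum>r<m1. of_int (d1 r) * u r) + (\<Sum>r<m2. of_int (d2 r) * u2 r)"
      using val comb_rhs_sum[where v=u] unfolding OPT_def u2_def by simp
    then show ?thesis using 1 2 by simp
  qed
  define k where "k = \<lfloor>c1\<rfloor>"
  define K where "K = (of_int k :: real)"
  have kc: "K \<le> c1" "c1 \<le> K + 1" unfolding K_def k_def by linarith+
  have g1: "S1.G c1 = S1.G K + (S1.G (K + 1) - S1.G K) * (c1 - K)"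
    using S1.G_affine[of k c1] kc unfolding K_def by simp
  have g2: "S2.G (of_int c - c1) = S2.G (of_int c - K - 1) + (S2.G (of_int c - K) - S2.G (of_int c - K - 1)) * ((of_int c - c1) - (of_int c - K - 1))"
    using S2.G_affine[of "c - k - 1" "of_int c - c1"] kc unfolding K_def by (simp add: algebra_simps)
  define H where "H t = S1.G t + S2.G (of_int c - t)" for t
  have HK: "H c1 = (1 - (c1 - K)) * H K + (c1 - K) * H (K + 1)"
    unfolding H_def g1 g2 by (simp add: algebra_simps)
  have "min (H K) (H (K + 1)) \<le> OPT"
    using min_conv[of "c1 - K" "H K" "H (K + 1)"] kc HK upper unfolding H_def by simp
  then obtain k' :: int where k': "H (of_int k') \<le> OPT"
    unfolding K_def by (metis min_def of_int_1 of_int_add)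
  obtain v1 :: "nat \<Rightarrow> int" where v1: "dual_feasible m1 (Suc n1) (sys_mat n1 A1 b1) (objv n1 w (of_int k')) (\<lambda>r. of_int (v1 r))"
    "(\<Sum>r<m1. of_int (d1 r) * of_int (v1 r)) = S1.G (of_int k')"
    using S1.G_int by blast
  obtain v2 :: "nat \<Rightarrow> int" where v2: "dual_feasible m2 (Suc n2) (sys_mat n2 A2 b2) (objv n2 w2 (of_int (c - k'))) (\<lambda>r. of_int (v2 r))"
    "(\<Sum>r<m2. of_int (d2 r) * of_int (v2 r)) = S2.G (of_int (c - k'))"
    using S2.G_int by blast
  define uu where "uu r = (if r < m1 then v1 r else v2 (r - m1))" for r
  have v1': "\<forall>r<m1. 0 \<le> v1 r" "\<forall>j<n1. (\<Sum>r<m1. of_int (A1 r j) * of_int (v1 r)) = (of_int (w j) :: real)"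
    "(\<Sum>r<m1. of_int (b1 r) * of_int (v1 r)) = (of_int k' :: real)"
    using v1(1) unfolding sys_dual_iff by auto
  have v2': "\<forall>r<m2. 0 \<le> v2 r" "\<forall>j<n2. (\<Sum>r<m2. of_int (A2 r j) * of_int (v2 r)) = (of_int (w2 j) :: real)"
    "(\<Sum>r<m2. of_int (b2 r) * of_int (v2 r)) = (of_int (c - k') :: real)"
    using v2(1) unfolding sys_dual_iff by auto
  have s1: "(\<Sum>r<m1. g r * (of_int (uu r) :: real)) = (\<Sum>r<m1. g r * of_int (v1 r))" for g
    by (intro sum.cong) (auto simp: uu_def)
  have s2: "(\<Sum>r<m2. g r * (of_int (uu (m1 + r)) :: real)) = (\<Sum>r<m2. g r * of_int (v2 r))" for g
    by (simp add: uu_def)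
  have duu: "dual_feasible (m1 + m2) (n1 + n2 + 1) ?C (\<lambda>j. of_int (w j)) (\<lambda>r. of_int (uu r))"
    unfolding dual_feasible_def
  proof (intro conjI allI impI)
    fix r assume "r < m1 + m2"
    then show "0 \<le> (of_int (uu r) :: real)" using v1'(1) v2'(1) by (auto simp: uu_def)
  next
    fix j assume j: "j < n1 + n2 + 1"
    consider "j < n1" | j' where "j' < n2" "j = n1 + j'" | "j = n1 + n2"
      using j by (metis add_Suc_right add_diff_inverse_nat add_less_imp_less_left less_Suc_eq not_less Suc_eq_plus1)
    then show "(\<Sum>r<m1 + m2. ?C r j * of_int (uu r)) = of_int (w j)"
    proof cases
      case 1
      then show ?thesis using comb_col1[OF 1, where v="\<lambda>r. of_int (uu r)"] s1 v1'(2) by simp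
    next
      case (2 j')
      then show ?thesis using comb_col2[OF 2(1), where v="\<lambda>r. of_int (uu r)"] s2 v2'(2)
        by (simp add: w2_def)
    next
      case 3
      then show ?thesis using comb_col3[where v="\<lambda>r. of_int (uu r)"] s1 s2 v1'(3) v2'(3)
        by (simp add: c_def)
    qed
  qed
  have uuval: "(\<Sum>r<m1 + m2. ?D r * of_int (uu r)) = H (of_int k')"
    using comb_rhs_sum[where v="\<lambda>r. of_int (uu r)"] s1 s2 v1(2) v2(2) unfolding H_def by simp
  show "\<exists>u. dual_feasible (m1 + m2) (n1 + n2 + 1) ?C (\<lambda>j. of_int (w j)) (\<lambda>r. of_int (u r)) \<and>
      (\<forall>u'. dual_feasible (m1 + m2) (n1 + n2 + 1) ?C (\<lambda>j. of_int (w j)) u' \<longrightarrow>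
          (\<Sum>r<m1 + m2. ?D r * of_int (u r)) \<le> (\<Sum>r<m1 + m2. ?D r * u' r))"
  proof (intro exI[of _ uu] conjI allI impI duu)
    fix u' assume "dual_feasible (m1 + m2) (n1 + n2 + 1) ?C (\<lambda>j. of_int (w j)) u'"
    from weak_duality[OF xs(1) this] have "OPT \<le> (\<Sum>r<m1 + m2. ?D r * u' r)" unfolding OPT_def .
    then show "(\<Sum>r<m1 + m2. ?D r * of_int (uu r)) \<le> (\<Sum>r<m1 + m2. ?D r * u' r)"
      using uuval k' by simp
  qed
qed

end
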